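(* Let $H<G$ be groups with $H$ $\sigma$-co-sofic in $G$. Then $H<G$ is relatively sofic over $G$.
   Context: $H$ is co-sofic in $G$ if there exist two decreasing sequences $(G_i)$ and $(H_i)$ of subgroups of $G$ such that $\bigcap_i G_i=H$, $H_i<G_i$, $H_i\triangleleft G$, $G/H_i$ is sofic, and $G_i/H_i$ is amenable for all $i$. $H$ is $\sigma$-co-sofic in $G$ if there exist two increasing sequences $(G_i)$ and $(H_i)$ of subgroups of $G$ such that $\bigcup_i G_i=G$, $\bigcup_i H_i=H$, $H_i<G_i$, and $H_i$ is co-sofic in $G_i$ for all $i$. $H<G$ is relatively sofic over a group $K$ if there exist a sequence of inclusions of groups $(H'_i<G'_i)_{i\in\mathbb N}$ with all $G'_i$ sofic and all $H'_i$ amenable, a free ultrafilter $\omega$ on $\mathbb N$, and an embedding $\pi:G\to\prod_\omega(G'_i\times K)$ into the algebraic ultraproduct such that $\pi(G)\cap\prod_\omega(H'_i\times K)=\pi(H)$. The algebraic ultraproduct is $\prod_\omega L_i=(\prod_i L_i)/N$ with $N=\{(g_i):\{i:g_i=1\}\in\omega\}$. *)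

theory Defs
  imports "HOL-Algebra.Algebra" "HOL-Combinatorics.Permutations"
begin

definition free_ultrafilter :: "nat filter \<Rightarrow> bool" where
  "free_ultrafilter \<omega> \<longleftrightarrow> \<omega> \<noteq> bot \<and> (\<forall>P. eventually P \<omega> \<or> eventually (\<lambda>x. \<not> P x) \<omega>)
      \<and> \<omega> \<le> cofinite"

definition hamming :: "nat \<Rightarrow> (nat \<Rightarrow> nat) \<Rightarrow> (nat \<Rightarrow> nat) \<Rightarrow> real" where
  "hamming n s t = real (card {k\<in>{..<n}. s k \<noteq> t k}) / real n"

definition sofic :: "('a, 'b) monoid_scheme \<Rightarrow> bool" where
  "sofic G \<longleftrightarrow> group G \<and>
    (\<forall>F \<epsilon>. finite F \<and> F \<subseteq> carrier G \<and> \<epsilon> > (0::real) \<longrightarrow>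
      (\<exists>n::nat. n > 0 \<and> (\<exists>\<phi>. (\<forall>g\<in>carrier G. \<phi> g permutes {..<n}) \<and> \<phi> \<one>\<^bsub>G\<^esub> = id \<and>
         (\<forall>g\<in>F. \<forall>h\<in>F. hamming n (\<phi> (g \<otimes>\<^bsub>G\<^esub> h)) (\<phi> g \<circ> \<phi> h) < \<epsilon>) \<and>
         (\<forall>g\<in>F. g \<noteq> \<one>\<^bsub>G\<^esub> \<longrightarrow> hamming n (\<phi> g) id > 1 - \<epsilon>))))"

definition amenable :: "('a, 'b) monoid_scheme \<Rightarrow> bool" where
  "amenable G \<longleftrightarrow> group G \<and>
    (\<exists>\<mu> :: 'a set \<Rightarrow> real.
       \<mu> (carrier G) = 1 \<and>
       (\<forall>A. A \<subseteq> carrier G \<longrightarrow> \<mu> A \<ge> 0) \<and>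
       (\<forall>A B. A \<subseteq> carrier G \<and> B \<subseteq> carrier G \<and> A \<inter> B = {} \<longrightarrow> \<mu> (A \<union> B) = \<mu> A + \<mu> B) \<and>
       (\<forall>g A. g \<in> carrier G \<and> A \<subseteq> carrier G \<longrightarrow> \<mu> (g <#\<^bsub>G\<^esub> A) = \<mu> A))"

definition co_sofic :: "('a, 'b) monoid_scheme \<Rightarrow> 'a set \<Rightarrow> bool" where
  "co_sofic G H \<longleftrightarrow>
    (\<exists>Gs Hs :: nat \<Rightarrow> 'a set.
       (\<forall>i. Gs (Suc i) \<subseteq> Gs i) \<and> (\<forall>i. Hs (Suc i) \<subseteq> Hs i) \<and>
       (\<forall>i. subgroup (Gs i) G) \<and>
       (\<Inter>i. Gs i) = H \<and>
       (\<forall>i. subgroup (Hs i) (G\<lparr>carrier := Gs i\<rparr>)) \<and>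
       (\<forall>i. Hs i \<lhd> G) \<and>
       (\<forall>i. sofic (G Mod Hs i)) \<and>
       (\<forall>i. amenable ((G\<lparr>carrier := Gs i\<rparr>) Mod Hs i)))"

definition sigma_co_sofic :: "('a, 'b) monoid_scheme \<Rightarrow> 'a set \<Rightarrow> bool" where
  "sigma_co_sofic G H \<longleftrightarrow>
    (\<exists>Gs Hs :: nat \<Rightarrow> 'a set.
       (\<forall>i. Gs i \<subseteq> Gs (Suc i)) \<and> (\<forall>i. Hs i \<subseteq> Hs (Suc i)) \<and>
       (\<forall>i. subgroup (Gs i) G) \<and>
       (\<Union>i. Gs i) = carrier G \<and> (\<Union>i. Hs i) = H \<and>
       (\<forall>i. subgroup (Hs i) (G\<lparr>carrier := Gs i\<rparr>)) \<and>
       (\<forall>i. co_sofic (G\<lparr>carrier := Gs i\<rparr>) (Hs i)))"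

definition ultra_null :: "nat filter \<Rightarrow> (nat \<Rightarrow> ('c, 'd) monoid_scheme) \<Rightarrow> (nat \<Rightarrow> 'c) set" where
  "ultra_null \<omega> L = {f \<in> carrier (product_group UNIV L). eventually (\<lambda>i. f i = \<one>\<^bsub>L i\<^esub>) \<omega>}"

definition ultraproduct :: "nat filter \<Rightarrow> (nat \<Rightarrow> ('c, 'd) monoid_scheme) \<Rightarrow> ((nat \<Rightarrow> 'c) set) monoid" where
  "ultraproduct \<omega> L = product_group UNIV L Mod ultra_null \<omega> L"

definition ultra_subset :: "nat filter \<Rightarrow> (nat \<Rightarrow> ('c, 'd) monoid_scheme) \<Rightarrow> (nat \<Rightarrow> 'c set) \<Rightarrow> (nat \<Rightarrow> 'c) set set" where
  "ultra_subset \<omega> L S = (\<lambda>f. ultra_null \<omega> L #>\<^bsub>product_group UNIV L\<^esub> f) ` (\<Pi>\<^sub>E i\<in>UNIV. S i)"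

text \<open>H < G is relatively sofic over K; the auxiliary groups G'_i are taken with
  elements of type 'e (given by the itself argument).\<close>
definition relatively_sofic_over ::
  "'e itself \<Rightarrow> ('a, 'b) monoid_scheme \<Rightarrow> 'a set \<Rightarrow> ('k, 'l) monoid_scheme \<Rightarrow> bool" where
  "relatively_sofic_over _ G H K \<longleftrightarrow>
    (\<exists>(G' :: nat \<Rightarrow> 'e monoid) (H' :: nat \<Rightarrow> 'e set) \<omega> \<pi>.
       (\<forall>i. sofic (G' i)) \<and>
       (\<forall>i. subgroup (H' i) (G' i)) \<and>
       (\<forall>i. amenable ((G' i)\<lparr>carrier := H' i\<rparr>)) \<and>
       free_ultrafilter \<omega> \<and>
       \<pi> \<in> hom G (ultraproduct \<omega> (\<lambda>i. G' i \<times>\<times> K)) \<and> inj_on \<pi> (carrier G) \<and>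
       \<pi> ` carrier G \<inter> ultra_subset \<omega> (\<lambda>i. G' i \<times>\<times> K) (\<lambda>i. H' i \<times> carrier K) = \<pi> ` H)"

end

theory Submission
  imports Defs "HOL-Library.Nat_Bijection"
begin

lemma ultra_exists:
  fixes F :: "'a filter" assumes F: "F \<noteq> bot"
  shows "\<exists>U. U \<le> F \<and> U \<noteq> bot \<and> (\<forall>P. eventually P U \<or> eventually (\<lambda>x. \<not> P x) U)"
proof -
  define E where "E = (\<lambda>U::'a filter. {P. eventually P U})"
  have Einj: "E U \<subseteq> E V \<longleftrightarrow> V \<le> U" for U V
    unfolding E_def le_filter_def by auto
  define A where "A = E ` {U. U \<le> F \<and> U \<noteq> bot}"
  have "\<forall>C\<in>chains A. \<exists>Y\<in>A. \<forall>Xa\<in>C. Xa \<subseteq> Y"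
  proof
    fix C assume C: "C \<in> chains A"
    show "\<exists>Y\<in>A. \<forall>Xa\<in>C. Xa \<subseteq> Y"
    proof (cases "C = {}")
      case True then show ?thesis using F unfolding A_def by blast
    next
      case False
      define Us where "Us = {U. U \<le> F \<and> U \<noteq> bot \<and> E U \<in> C}"
      have CA: "C \<subseteq> A" and ch: "\<forall>Xa\<in>C. \<forall>Y\<in>C. Xa \<subseteq> Y \<or> Y \<subseteq> Xa"
        using C unfolding chains_def chain_subset_def by auto
      have CUs: "\<forall>Xa\<in>C. \<exists>U\<in>Us. Xa = E U" using CA unfolding A_def Us_def by auto
      have ne: "Us \<noteq> {}" using CUs False by blast
      have base: "\<exists>x\<in>Us. x \<le> inf a b" if "a \<in> Us" "b \<in> Us" for a b
      proof -
        have "E a \<subseteq> E b \<or> E b \<subseteq> E a" using ch that unfolding Us_def by auto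
        then have "b \<le> a \<or> a \<le> b" using Einj by blast
        then have "b \<le> inf a b \<or> a \<le> inf a b" by auto
        then show ?thesis using that by blast
      qed
      have ev: "eventually P (Inf Us) \<longleftrightarrow> (\<exists>b\<in>Us. eventually P b)" for P
        by (rule eventually_Inf_base[OF ne base])
      have "Inf Us \<noteq> bot" unfolding trivial_limit_def ev unfolding Us_def trivial_limit_def by auto
      moreover have "Inf Us \<le> F" 
      proof -
        obtain u where "u \<in> Us" using ne by blast
        then have "Inf Us \<le> u" "u \<le> F" unfolding Us_def by (auto intro: Inf_lower)
        then show ?thesis by (rule order_trans)
      qed
      ultimately have "E (Inf Us) \<in> A" unfolding A_def by blast
      moreover have "\<forall>Xa\<in>C. Xa \<subseteq> E (Inf Us)"
      proof
        fix Xa assume "Xa \<in> C"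
        then obtain U where "U \<in> Us" "Xa = E U" using CUs by blast
        moreover from this(1) have "Inf Us \<le> U" by (rule Inf_lower)
        ultimately show "Xa \<subseteq> E (Inf Us)" using Einj by simp
      qed
      ultimately show ?thesis by blast
    qed
  qed
  from Zorn_Lemma2[OF this] obtain M where M: "M \<in> A" and max: "\<forall>Xa\<in>A. M \<subseteq> Xa \<longrightarrow> Xa = M" by blast
  then obtain U where U: "U \<le> F" "U \<noteq> bot" "M = E U" unfolding A_def by blast
  have "eventually P U \<or> eventually (\<lambda>x. \<not> P x) U" for P
  proof (cases "inf U (principal {x. \<not> P x}) = bot")
    case True
    then have "eventually (\<lambda>x. False) (inf U (principal {x. \<not> P x}))" by simp
    then show ?thesis unfolding eventually_inf_principal by auto
  next
    case False
    let ?V = "inf U (principal {x. \<not> P x})"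
    have "?V \<le> F" using U by (meson inf.coboundedI1)
    then have "E ?V \<in> A" using False unfolding A_def by blast
    moreover have "M \<subseteq> E ?V" using U Einj by simp
    ultimately have "E ?V = E U" using max U by blast
    moreover have "eventually (\<lambda>x. \<not> P x) ?V" unfolding eventually_inf_principal by simp
    ultimately show ?thesis unfolding E_def by auto
  qed
  then show ?thesis using U by blast
qed

lemma null_normal:
  assumes grp: "\<And>i. group (L i)"
  shows "ultra_null \<omega> L \<lhd> product_group UNIV L"
proof -
  let ?P = "product_group UNIV L"
  have gP: "group ?P" using grp by simp
  have sub: "subgroup (ultra_null \<omega> L) ?P"
  proof
    show "ultra_null \<omega> L \<subseteq> carrier ?P" unfolding ultra_null_def by auto
  next
    fix x y assume x: "x \<in> ultra_null \<omega> L" and y: "y \<in> ultra_null \<omega> L"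
    have "x \<otimes>\<^bsub>?P\<^esub> y \<in> carrier ?P" using x y unfolding ultra_null_def by (blast intro: monoid.m_closed[OF group.is_monoid[OF gP]])
    moreover have "eventually (\<lambda>i. (x \<otimes>\<^bsub>?P\<^esub> y) i = \<one>\<^bsub>L i\<^esub>) \<omega>"
      using eventually_conj[OF conjunct2[OF x[unfolded ultra_null_def mem_Collect_eq]] conjunct2[OF y[unfolded ultra_null_def mem_Collect_eq]]]
      by (rule eventually_mono) (simp add: grp group.is_monoid)
    ultimately show "x \<otimes>\<^bsub>?P\<^esub> y \<in> ultra_null \<omega> L" unfolding ultra_null_def by blast
  next
    show "\<one>\<^bsub>?P\<^esub> \<in> ultra_null \<omega> L" unfolding ultra_null_def using gP by (simp add: group.is_monoid monoid.one_closed[of ?P, simplified] grp)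
  next
    fix x assume x: "x \<in> ultra_null \<omega> L"
    then have xc: "x \<in> (\<Pi>\<^sub>E i\<in>UNIV. carrier (L i))" and ev: "eventually (\<lambda>i. x i = \<one>\<^bsub>L i\<^esub>) \<omega>" unfolding ultra_null_def by auto
    have "inv\<^bsub>?P\<^esub> x \<in> carrier ?P" using x unfolding ultra_null_def by (blast intro: group.inv_closed[OF gP])
    moreover have "eventually (\<lambda>i. (inv\<^bsub>?P\<^esub> x) i = \<one>\<^bsub>L i\<^esub>) \<omega>"
      using ev by (rule eventually_mono) (simp add: xc grp monoid.inv_one group.is_monoid)
    ultimately show "inv\<^bsub>?P\<^esub> x \<in> ultra_null \<omega> L" unfolding ultra_null_def by blast
  qed
  show ?thesis unfolding group.normal_inv_iff[OF gP]
  proof (intro conjI sub ballI)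
    fix x h assume x: "x \<in> carrier ?P" and h: "h \<in> ultra_null \<omega> L"
    then have hc: "h \<in> carrier ?P" and ev: "eventually (\<lambda>i. h i = \<one>\<^bsub>L i\<^esub>) \<omega>" unfolding ultra_null_def by auto
    have "x \<otimes>\<^bsub>?P\<^esub> h \<otimes>\<^bsub>?P\<^esub> inv\<^bsub>?P\<^esub> x \<in> carrier ?P" using x hc by (meson gP group.inv_closed group.is_monoid monoid.m_closed)
    moreover have "eventually (\<lambda>i. (x \<otimes>\<^bsub>?P\<^esub> h \<otimes>\<^bsub>?P\<^esub> inv\<^bsub>?P\<^esub> x) i = \<one>\<^bsub>L i\<^esub>) \<omega>"
      using ev
    proof (rule eventually_mono)
      fix i assume "h i = \<one>\<^bsub>L i\<^esub>"
      moreover have "x i \<in> carrier (L i)" using x by auto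
      ultimately show "(x \<otimes>\<^bsub>?P\<^esub> h \<otimes>\<^bsub>?P\<^esub> inv\<^bsub>?P\<^esub> x) i = \<one>\<^bsub>L i\<^esub>"
        using x by (simp add: grp group.r_inv group.is_monoid)
    qed
    ultimately show "x \<otimes>\<^bsub>?P\<^esub> h \<otimes>\<^bsub>?P\<^esub> inv\<^bsub>?P\<^esub> x \<in> ultra_null \<omega> L" unfolding ultra_null_def by blast
  qed
qed

lemma cos_eq:
  assumes grp: "\<And>i. group (L i)"
  and f: "f \<in> carrier (product_group UNIV L)" and g: "g \<in> carrier (product_group UNIV L)"
  shows "(ultra_null \<omega> L #>\<^bsub>product_group UNIV L\<^esub> f = ultra_null \<omega> L #>\<^bsub>product_group UNIV L\<^esub> g)
     \<longleftrightarrow> eventually (\<lambda>i. f i = g i) \<omega>"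
proof -
  let ?P = "product_group UNIV L" and ?N = "ultra_null \<omega> L"
  have gP: "group ?P" using grp by simp
  have sN: "subgroup ?N ?P" using null_normal[OF grp] by (simp add: normal_def)
  have "(?N #>\<^bsub>?P\<^esub> f = ?N #>\<^bsub>?P\<^esub> g) \<longleftrightarrow> f \<in> ?N #>\<^bsub>?P\<^esub> g"
  proof
    assume "?N #>\<^bsub>?P\<^esub> f = ?N #>\<^bsub>?P\<^esub> g"
    then show "f \<in> ?N #>\<^bsub>?P\<^esub> g" using group.repr_independenceD[OF gP sN f, of g] by simp
  next
    assume "f \<in> ?N #>\<^bsub>?P\<^esub> g"
    then show "?N #>\<^bsub>?P\<^esub> f = ?N #>\<^bsub>?P\<^esub> g" using group.repr_independence[OF gP _ g sN] by simp
  qed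
  also have "\<dots> \<longleftrightarrow> f \<otimes>\<^bsub>?P\<^esub> inv\<^bsub>?P\<^esub> g \<in> ?N"
    using subgroup.rcos_module_imp[OF sN gP g] subgroup.rcos_module_rev[OF sN gP g f] by blast
  also have "\<dots> \<longleftrightarrow> eventually (\<lambda>i. f i = g i) \<omega>"
  proof -
    have "f \<otimes>\<^bsub>?P\<^esub> inv\<^bsub>?P\<^esub> g \<in> carrier ?P" using f g by (meson gP group.inv_closed group.is_monoid monoid.m_closed)
    moreover have "(f \<otimes>\<^bsub>?P\<^esub> inv\<^bsub>?P\<^esub> g) i = \<one>\<^bsub>L i\<^esub> \<longleftrightarrow> f i = g i" for i
    proof -
      interpret Li: group "L i" by (rule grp)
      have "f i \<in> carrier (L i)" "g i \<in> carrier (L i)" using f g by auto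
      moreover have "(inv\<^bsub>?P\<^esub> g) i = inv\<^bsub>L i\<^esub> (g i)" using g grp by simp
      ultimately show ?thesis using Li.inv_solve_right[of "\<one>\<^bsub>L i\<^esub>" "f i" "g i"] by auto
    qed
    ultimately show ?thesis unfolding ultra_null_def by simp
  qed
  finally show ?thesis .
qed

lemma criterion:
  fixes G :: "('a,'b) monoid_scheme" and G' :: "nat \<Rightarrow> 'e monoid"
  assumes grp: "group G" and Hsub: "H \<subseteq> carrier G"
  and sof: "\<forall>n. sofic (G' n)" and sub: "\<forall>n. subgroup (H' n) (G' n)"
  and am: "\<forall>n. amenable ((G' n)\<lparr>carrier := H' n\<rparr>)"
  and fu: "free_ultrafilter \<omega>"
  and phi: "\<And>n g. g \<in> carrier G \<Longrightarrow> \<phi> n g \<in> carrier (G' n)"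
  and hm: "\<And>g h. g \<in> carrier G \<Longrightarrow> h \<in> carrier G \<Longrightarrow>
      eventually (\<lambda>n. \<phi> n (g \<otimes>\<^bsub>G\<^esub> h) = \<phi> n g \<otimes>\<^bsub>G' n\<^esub> \<phi> n h) \<omega>"
  and mem: "\<And>g. g \<in> carrier G \<Longrightarrow> eventually (\<lambda>n. \<phi> n g \<in> H' n) \<omega> \<longleftrightarrow> g \<in> H"
  shows "relatively_sofic_over TYPE('e) G H G"
proof -
  define L where "L = (\<lambda>n. G' n \<times>\<times> G)"
  have gG': "group (G' n)" for n using sof unfolding sofic_def by blast
  have gL: "group (L n)" for n unfolding L_def by (rule DirProd_group[OF gG' grp])
  let ?P = "product_group UNIV L" and ?N = "ultra_null \<omega> L"
  have gP: "group ?P" using gL by simp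
  have nN: "?N \<lhd> ?P" by (rule null_normal[OF gL])
  have nb: "\<omega> \<noteq> bot" using fu unfolding free_ultrafilter_def by blast
  define F where "F = (\<lambda>g n. (\<phi> n g, g))"
  have FP: "F g \<in> carrier ?P" if "g \<in> carrier G" for g
    using that phi unfolding F_def L_def by auto
  define \<pi> where "\<pi> = (\<lambda>g. ?N #>\<^bsub>?P\<^esub> F g)"
  have ce: "\<And>f g. f \<in> carrier ?P \<Longrightarrow> g \<in> carrier ?P \<Longrightarrow>
      (?N #>\<^bsub>?P\<^esub> f = ?N #>\<^bsub>?P\<^esub> g) \<longleftrightarrow> eventually (\<lambda>i. f i = g i) \<omega>"
    by (rule cos_eq[OF gL])
  have hom: "\<pi> \<in> hom G (ultraproduct \<omega> L)"
  proof (rule homI)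
    fix x assume "x \<in> carrier G"
    moreover have "?N \<subseteq> carrier ?P" using nN unfolding normal_def subgroup_def by blast
    ultimately show "\<pi> x \<in> carrier (ultraproduct \<omega> L)"
      unfolding \<pi>_def ultraproduct_def FactGroup_def using group.rcosetsI[OF gP _ FP] by simp
  next
    fix x y assume x: "x \<in> carrier G" and y: "y \<in> carrier G"
    have xy: "x \<otimes>\<^bsub>G\<^esub> y \<in> carrier G" using x y grp by (simp add: group.is_monoid monoid.m_closed)
    have "\<pi> x \<otimes>\<^bsub>ultraproduct \<omega> L\<^esub> \<pi> y = ?N #>\<^bsub>?P\<^esub> (F x \<otimes>\<^bsub>?P\<^esub> F y)"
      unfolding \<pi>_def ultraproduct_def using normal.rcos_sum[OF nN FP[OF x] FP[OF y]] by simp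
    also have "\<dots> = \<pi> (x \<otimes>\<^bsub>G\<^esub> y)"
      unfolding \<pi>_def
    proof (subst ce)
      show "F x \<otimes>\<^bsub>?P\<^esub> F y \<in> carrier ?P" using FP[OF x] FP[OF y] by (meson gP group.is_monoid monoid.m_closed)
      show "F (x \<otimes>\<^bsub>G\<^esub> y) \<in> carrier ?P" by (rule FP[OF xy])
      show "\<forall>\<^sub>F i in \<omega>. (F x \<otimes>\<^bsub>?P\<^esub> F y) i = F (x \<otimes>\<^bsub>G\<^esub> y) i"
        using hm[OF x y] by (rule eventually_mono) (simp add: F_def L_def)
    qed
    finally show "\<pi> (x \<otimes>\<^bsub>G\<^esub> y) = \<pi> x \<otimes>\<^bsub>ultraproduct \<omega> L\<^esub> \<pi> y" by simp
  qed
  have inj: "inj_on \<pi> (carrier G)"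
  proof (rule inj_onI)
    fix x y assume x: "x \<in> carrier G" and y: "y \<in> carrier G" and e: "\<pi> x = \<pi> y"
    then have "eventually (\<lambda>i. F x i = F y i) \<omega>" using ce[OF FP[OF x] FP[OF y]] unfolding \<pi>_def by simp
    then have "eventually (\<lambda>i. x = y) \<omega>" by (rule eventually_mono) (simp add: F_def)
    then show "x = y" using nb by (simp add: eventually_const)
  qed
  define S where "S = (\<lambda>n. H' n \<times> carrier G)"
  have SP: "f \<in> carrier ?P" if "f \<in> (\<Pi>\<^sub>E i\<in>UNIV. S i)" for f
  proof -
    have Hs: "H' n \<subseteq> carrier (G' n)" for n using sub unfolding subgroup_def by blast
    have "f i \<in> carrier (L i)" for i
    proof -
      have "f i \<in> H' i \<times> carrier G" using that unfolding S_def by blast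
      then show ?thesis using Hs[of i] unfolding L_def by auto
    qed
    moreover have "f \<in> extensional UNIV" using that by (simp add: PiE_def)
    ultimately show ?thesis by (simp add: PiE_iff)
  qed
  have key: "\<pi> g \<in> ultra_subset \<omega> L S \<longleftrightarrow> g \<in> H" if g: "g \<in> carrier G" for g
  proof
    assume "\<pi> g \<in> ultra_subset \<omega> L S"
    then obtain f where f: "f \<in> (\<Pi>\<^sub>E i\<in>UNIV. S i)" and e: "?N #>\<^bsub>?P\<^esub> f = \<pi> g"
      unfolding ultra_subset_def by auto
    have "eventually (\<lambda>i. f i = F g i) \<omega>" using e ce[OF SP[OF f] FP[OF g]] unfolding \<pi>_def by simp
    then have "eventually (\<lambda>n. \<phi> n g \<in> H' n) \<omega>"
    proof (rule eventually_mono)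
      fix i assume "f i = F g i"
      moreover have "f i \<in> S i" using f by auto
      ultimately show "\<phi> i g \<in> H' i" unfolding S_def F_def by auto
    qed
    then show "g \<in> H" using mem[OF g] by simp
  next
    assume "g \<in> H"
    then have ev: "eventually (\<lambda>n. \<phi> n g \<in> H' n) \<omega>" using mem[OF g] by simp
    define f where "f = (\<lambda>n. if \<phi> n g \<in> H' n then F g n else (\<one>\<^bsub>G' n\<^esub>, g))"
    have f: "f \<in> (\<Pi>\<^sub>E i\<in>UNIV. S i)" unfolding f_def S_def F_def using g sub subgroup.one_closed by (auto simp: PiE_iff)
    have "eventually (\<lambda>i. f i = F g i) \<omega>" using ev by (rule eventually_mono) (simp add: f_def)
    then have "?N #>\<^bsub>?P\<^esub> f = \<pi> g" using ce[OF SP[OF f] FP[OF g]] unfolding \<pi>_def by simp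
    then show "\<pi> g \<in> ultra_subset \<omega> L S" unfolding ultra_subset_def using f by force
  qed
  have int: "\<pi> ` carrier G \<inter> ultra_subset \<omega> L S = \<pi> ` H"
    using key Hsub by auto
  show ?thesis unfolding relatively_sofic_over_def
    apply (rule exI[of _ G'], rule exI[of _ H'], rule exI[of _ \<omega>], rule exI[of _ \<pi>])
    using sof sub am fu hom inj int unfolding L_def S_def by blast
qed

lemma diag_ultra:
  "\<exists>U. free_ultrafilter U \<and> (\<forall>i0 (J::nat\<Rightarrow>nat). eventually (\<lambda>n. fst (prod_decode n) \<ge> i0 \<and> snd (prod_decode n) \<ge> J (fst (prod_decode n))) U)"
proof -
  define S where "S = (\<lambda>p::nat \<times> (nat\<Rightarrow>nat). {n. fst (prod_decode n) \<ge> fst p \<and> snd (prod_decode n) \<ge> snd p (fst (prod_decode n))})"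
  define F0 where "F0 = (INF p\<in>UNIV. principal (S p))"
  have ev: "eventually P F0 \<longleftrightarrow> (\<exists>p. \<forall>n\<in>S p. P n)" for P
    unfolding F0_def
  proof (subst eventually_INF_base)
    show "UNIV \<noteq> {}" by simp
    fix a b :: "nat \<times> (nat\<Rightarrow>nat)"
    let ?x = "(max (fst a) (fst b), \<lambda>i. max (snd a i) (snd b i))"
    have "S ?x \<subseteq> S a \<inter> S b" unfolding S_def by auto
    then show "\<exists>x\<in>UNIV. principal (S x) \<le> inf (principal (S a)) (principal (S b))" by auto
  qed (auto simp: eventually_principal)
  have nb: "F0 \<noteq> bot"
  proof
    assume "F0 = bot"
    then have "eventually (\<lambda>_. False) F0" by simp
    then obtain p where p: "\<forall>n\<in>S p. False" using ev by blast
    have "prod_encode (fst p, snd p (fst p)) \<in> S p" unfolding S_def by simp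
    then show False using p by blast
  qed
  have le: "F0 \<le> cofinite"
    unfolding cofinite_eq_sequentially le_filter_def
  proof (intro allI impI)
    fix P assume "eventually P sequentially"
    then obtain N where N: "\<forall>n\<ge>N. P n" unfolding eventually_sequentially by blast
    have "\<forall>n\<in>S (N, \<lambda>_. 0). P n"
    proof
      fix n assume "n \<in> S (N, \<lambda>_. 0)"
      then have "N \<le> fst (prod_decode n)" unfolding S_def by simp
      also have "\<dots> \<le> prod_encode (prod_decode n)" 
        by (metis le_prod_encode_1 prod.collapse)
      finally show "P n" using N by simp
    qed
    then show "eventually P F0" using ev by blast
  qed
  obtain U where U: "U \<le> F0" "U \<noteq> bot" "\<forall>P. eventually P U \<or> eventually (\<lambda>x. \<not> P x) U"
    using ultra_exists[OF nb] by blast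
  have "free_ultrafilter U" unfolding free_ultrafilter_def using U le by (meson order_trans)
  moreover have "eventually (\<lambda>n. fst (prod_decode n) \<ge> i0 \<and> snd (prod_decode n) \<ge> J (fst (prod_decode n))) U" for i0 J
  proof -
    have "eventually (\<lambda>n. fst (prod_decode n) \<ge> i0 \<and> snd (prod_decode n) \<ge> J (fst (prod_decode n))) F0"
      using ev[of "\<lambda>n. fst (prod_decode n) \<ge> i0 \<and> snd (prod_decode n) \<ge> J (fst (prod_decode n))"]
      unfolding S_def by (metis (mono_tags, lifting) fst_conv mem_Collect_eq snd_conv)
    then show ?thesis using U(1) unfolding le_filter_def by blast
  qed
  ultimately show ?thesis by blast
qed

lemma rcos_upd [simp]: "H #>\<^bsub>G\<lparr>carrier := Xs\<rparr>\<^esub> x = H #>\<^bsub>G\<^esub> x"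
  by (simp add: r_coset_def)

lemma smult_upd [simp]: "A <#>\<^bsub>G\<lparr>carrier := Xs\<rparr>\<^esub> B = A <#>\<^bsub>G\<^esub> B"
  by (simp add: set_mult_def)

lemma Mod_upd: "((G\<lparr>carrier := Xs\<rparr>) Mod N)\<lparr>carrier := carrier ((G\<lparr>carrier := Ys\<rparr>) Mod N)\<rparr> = (G\<lparr>carrier := Ys\<rparr>) Mod N"
  by (simp add: FactGroup_def set_mult_def fun_eq_iff)

theorem corollary2p19:
  fixes G :: "('a, 'b) monoid_scheme" and H :: "'a set"
  assumes "group G" and "subgroup H G" and "sigma_co_sofic G H"
  shows "relatively_sofic_over TYPE('a set) G H G"
proof -
  note grp = assms(1)
  obtain Gs Hs where Gsm: "\<forall>i. Gs i \<subseteq> Gs (Suc i)" and Hsm: "\<forall>i. Hs i \<subseteq> Hs (Suc i)"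
    and Gsub: "\<forall>i. subgroup (Gs i) G" and GU: "(\<Union>i. Gs i) = carrier G" and HU: "(\<Union>i. Hs i) = H"
    and Hsub: "\<forall>i. subgroup (Hs i) (G\<lparr>carrier := Gs i\<rparr>)"
    and cs: "\<forall>i. co_sofic (G\<lparr>carrier := Gs i\<rparr>) (Hs i)"
    using assms(3) unfolding sigma_co_sofic_def by blast
  define Q where "Q = (\<lambda>i (GG::nat \<Rightarrow> 'a set) (HH::nat \<Rightarrow> 'a set). (\<forall>j. GG (Suc j) \<subseteq> GG j) \<and> (\<forall>j. HH (Suc j) \<subseteq> HH j) \<and>
       (\<forall>j. subgroup (GG j) (G\<lparr>carrier := Gs i\<rparr>)) \<and>
       (\<Inter>j. GG j) = Hs i \<and>
       (\<forall>j. subgroup (HH j) ((G\<lparr>carrier := Gs i\<rparr>)\<lparr>carrier := GG j\<rparr>)) \<and>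
       (\<forall>j. HH j \<lhd> G\<lparr>carrier := Gs i\<rparr>) \<and>
       (\<forall>j. sofic (G\<lparr>carrier := Gs i\<rparr> Mod HH j)) \<and>
       (\<forall>j. amenable (((G\<lparr>carrier := Gs i\<rparr>)\<lparr>carrier := GG j\<rparr>) Mod HH j)))"
  have "\<forall>i. \<exists>GG HH. Q i GG HH"
  proof
    fix i
    show "\<exists>GG HH. Q i GG HH" using cs[rule_format, of i] unfolding co_sofic_def Q_def .
  qed
  then have "\<forall>i. \<exists>GG. \<exists>HH. Q i GG HH" by blast
  from choice[OF this] obtain GG where "\<forall>i. \<exists>HH. Q i (GG i) HH" ..
  from choice[OF this] obtain HH where p: "\<forall>i. Q i (GG i) (HH i)" ..
  have GGdec: "GG i (Suc j) \<subseteq> GG i j" for i j using p unfolding Q_def by simp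
  have GGsub: "subgroup (GG i j) (G\<lparr>carrier := Gs i\<rparr>)" for i j using p unfolding Q_def by simp
  have GGint: "(\<Inter>j. GG i j) = Hs i" for i using p unfolding Q_def by simp
  have HHsub: "subgroup (HH i j) (G\<lparr>carrier := GG i j\<rparr>)" for i j using p unfolding Q_def by simp
  have HHn: "HH i j \<lhd> G\<lparr>carrier := Gs i\<rparr>" for i j using p unfolding Q_def by simp
  have HHsof: "sofic (G\<lparr>carrier := Gs i\<rparr> Mod HH i j)" for i j using p unfolding Q_def by simp
  have HHam: "amenable ((G\<lparr>carrier := GG i j\<rparr>) Mod HH i j)" for i j using p unfolding Q_def by simp
  have Gsmono: "Gs i \<subseteq> Gs k" if "i \<le> k" for i k using lift_Suc_mono_le[of Gs, OF _ that] Gsm by blast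
  have Hsmono: "Hs i \<subseteq> Hs k" if "i \<le> k" for i k using lift_Suc_mono_le[of Hs, OF _ that] Hsm by blast
  have GGanti: "GG i k \<subseteq> GG i j" if "j \<le> k" for i j k using lift_Suc_antimono_le[of "GG i", OF _ that] GGdec by blast
  have GsG: "Gs i \<subseteq> carrier G" for i using Gsub subgroup.subset by blast
  have GGGs: "GG i j \<subseteq> Gs i" for i j using GGsub[of i j] subgroup.subset by fastforce
  have HHGG: "HH i j \<subseteq> GG i j" for i j using HHsub[of i j] subgroup.subset by fastforce
  have one_HH: "\<one>\<^bsub>G\<^esub> \<in> HH i j" for i j using subgroup.one_closed[OF HHsub[of i j]] by simp
  define a where "a = (\<lambda>n. fst (prod_decode n))"
  define b where "b = (\<lambda>n. snd (prod_decode n))"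
  obtain \<omega> where fu: "free_ultrafilter \<omega>"
    and evJ: "\<And>i0 J. eventually (\<lambda>n. a n \<ge> i0 \<and> b n \<ge> J (a n)) \<omega>"
    using diag_ultra unfolding a_def b_def by blast
  have nb: "\<omega> \<noteq> bot" using fu unfolding free_ultrafilter_def by blast
  have eva: "eventually (\<lambda>n. a n \<ge> i0) \<omega>" for i0
    using evJ[of i0 "\<lambda>_. 0"] by (rule eventually_mono) simp
  define G' where "G' = (\<lambda>n. G\<lparr>carrier := Gs (a n)\<rparr> Mod HH (a n) (b n))"
  define H' where "H' = (\<lambda>n. carrier ((G\<lparr>carrier := GG (a n) (b n)\<rparr>) Mod HH (a n) (b n)))"
  define \<phi> where "\<phi> = (\<lambda>n g. if g \<in> Gs (a n) then HH (a n) (b n) #>\<^bsub>G\<^esub> g else HH (a n) (b n))"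
  show ?thesis
  proof (rule criterion[where G' = G' and H' = H' and \<phi> = \<phi>])
    show "group G" by (rule grp)
    show "H \<subseteq> carrier G" using assms(2) subgroup.subset by blast
    show "\<forall>n. sofic (G' n)" unfolding G'_def using HHsof by blast
    show am: "\<forall>n. amenable ((G' n)\<lparr>carrier := H' n\<rparr>)" unfolding G'_def H'_def Mod_upd using HHam by blast
    show "free_ultrafilter \<omega>" by (rule fu)
    show "\<forall>n. subgroup (H' n) (G' n)"
    proof
      fix n
      have gG': "group (G' n)" using HHsof unfolding G'_def sofic_def by blast
      have "H' n \<subseteq> carrier (G' n)"
        unfolding H'_def G'_def FactGroup_def RCOSETS_def using GGGs by auto
      moreover have "group ((G' n)\<lparr>carrier := H' n\<rparr>)" using am unfolding amenable_def by blast
      ultimately show "subgroup (H' n) (G' n)" by (rule group.group_incl_imp_subgroup[OF gG'])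
    qed
    show "\<phi> n g \<in> carrier (G' n)" if "g \<in> carrier G" for n g
    proof (cases "g \<in> Gs (a n)")
      case True
      then show ?thesis unfolding \<phi>_def G'_def FactGroup_def RCOSETS_def by auto
    next
      case False
      have "\<one>\<^bsub>G\<^esub> \<in> Gs (a n)" using subgroup.one_closed[OF Gsub[rule_format, of "a n"]] by simp
      moreover have "HH (a n) (b n) #>\<^bsub>G\<^esub> \<one>\<^bsub>G\<^esub> = HH (a n) (b n)"
      proof -
        have "h \<otimes>\<^bsub>G\<^esub> \<one>\<^bsub>G\<^esub> = h" if "h \<in> HH (a n) (b n)" for h
          using that HHGG GGGs GsG by (meson grp group.is_monoid monoid.r_one subsetD)
        then show ?thesis unfolding r_coset_def by force
      qed
      ultimately show ?thesis using False unfolding \<phi>_def G'_def FactGroup_def RCOSETS_def by force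
    qed
    show "eventually (\<lambda>n. \<phi> n (g \<otimes>\<^bsub>G\<^esub> h) = \<phi> n g \<otimes>\<^bsub>G' n\<^esub> \<phi> n h) \<omega>"
      if g: "g \<in> carrier G" and h: "h \<in> carrier G" for g h
    proof -
      obtain i1 where i1: "g \<in> Gs i1" using g GU by blast
      obtain i2 where i2: "h \<in> Gs i2" using h GU by blast
      show ?thesis using eva[of "max i1 i2"]
      proof (rule eventually_mono)
        fix n assume n: "max i1 i2 \<le> a n"
        have gn: "g \<in> Gs (a n)" using i1 Gsmono[of i1 "a n"] n by auto
        have hn: "h \<in> Gs (a n)" using i2 Gsmono[of i2 "a n"] n by auto
        have ghn: "g \<otimes>\<^bsub>G\<^esub> h \<in> Gs (a n)" using subgroup.m_closed[OF Gsub[rule_format, of "a n"] gn hn] .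
        have "HH (a n) (b n) #>\<^bsub>G\<lparr>carrier := Gs (a n)\<rparr>\<^esub> g <#>\<^bsub>G\<lparr>carrier := Gs (a n)\<rparr>\<^esub> (HH (a n) (b n) #>\<^bsub>G\<lparr>carrier := Gs (a n)\<rparr>\<^esub> h)
           = HH (a n) (b n) #>\<^bsub>G\<lparr>carrier := Gs (a n)\<rparr>\<^esub> (g \<otimes>\<^bsub>G\<lparr>carrier := Gs (a n)\<rparr>\<^esub> h)"
          by (rule normal.rcos_sum[OF HHn]) (simp_all add: gn hn)
        then show "\<phi> n (g \<otimes>\<^bsub>G\<^esub> h) = \<phi> n g \<otimes>\<^bsub>G' n\<^esub> \<phi> n h"
          unfolding \<phi>_def G'_def using gn hn ghn by simp
      qed
    qed
    show "eventually (\<lambda>n. \<phi> n g \<in> H' n) \<omega> \<longleftrightarrow> g \<in> H" if g: "g \<in> carrier G" for g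
    proof
      assume gH: "g \<in> H"
      then obtain i0 where i0: "g \<in> Hs i0" using HU by blast
      show "eventually (\<lambda>n. \<phi> n g \<in> H' n) \<omega>" using eva[of i0]
      proof (rule eventually_mono)
        fix n assume n: "i0 \<le> a n"
        have "g \<in> Hs (a n)" using i0 Hsmono[OF n] by auto
        then have gGG: "g \<in> GG (a n) (b n)" using GGint[of "a n"] by blast
        then have "g \<in> Gs (a n)" using GGGs by blast
        then show "\<phi> n g \<in> H' n" unfolding \<phi>_def H'_def FactGroup_def RCOSETS_def using gGG by auto
      qed
    next
      assume ev: "eventually (\<lambda>n. \<phi> n g \<in> H' n) \<omega>"
      show "g \<in> H"
      proof (rule ccontr)
        assume gH: "g \<notin> H"
        obtain i0 where i0: "g \<in> Gs i0" using g GU by blast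
        define J where "J = (\<lambda>i. SOME j. g \<notin> GG i j)"
        have J: "g \<notin> GG i k" if "i0 \<le> i" "J i \<le> k" for i k
        proof -
          have "g \<notin> Hs i" using gH HU by blast
          then have "\<exists>j. g \<notin> GG i j" using GGint[of i] by blast
          then have "g \<notin> GG i (J i)" unfolding J_def by (rule someI_ex)
          then show ?thesis using GGanti[OF that(2)] by blast
        qed
        have "eventually (\<lambda>n. \<phi> n g \<notin> H' n) \<omega>" using evJ[of i0 J]
        proof (rule eventually_mono)
          fix n assume n: "i0 \<le> a n \<and> J (a n) \<le> b n"
          have gn: "g \<in> Gs (a n)" using i0 Gsmono[of i0 "a n"] n by auto
          have gnot: "g \<notin> GG (a n) (b n)" using J n by blast
          show "\<phi> n g \<notin> H' n"
          proof
            assume "\<phi> n g \<in> H' n"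
            then obtain x where x: "x \<in> GG (a n) (b n)" and e: "HH (a n) (b n) #>\<^bsub>G\<^esub> g = HH (a n) (b n) #>\<^bsub>G\<^esub> x"
              unfolding \<phi>_def H'_def FactGroup_def RCOSETS_def using gn by auto
            have "g \<in> HH (a n) (b n) #>\<^bsub>G\<^esub> g"
              unfolding r_coset_def using one_HH g grp by (force simp: group.is_monoid monoid.l_one)
            then have "g \<in> HH (a n) (b n) #>\<^bsub>G\<^esub> x" using e by simp
            then obtain y where y: "y \<in> HH (a n) (b n)" and gy: "g = y \<otimes>\<^bsub>G\<^esub> x"
              unfolding r_coset_def by blast
            have yG: "y \<in> GG (a n) (b n)" using y HHGG by blast
            have "y \<otimes>\<^bsub>G\<lparr>carrier := Gs (a n)\<rparr>\<^esub> x \<in> GG (a n) (b n)"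
              by (rule subgroup.m_closed[OF GGsub yG x])
            then show False using gy gnot by simp
          qed
        qed
        with ev have "eventually (\<lambda>n. \<phi> n g \<in> H' n \<and> \<phi> n g \<notin> H' n) \<omega>" by (rule eventually_conj)
        then have "eventually (\<lambda>_. False) \<omega>" by (rule eventually_mono) blast
        then show False using nb by simp
      qed
    qed
  qed
qed

end
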